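(* Let $Q=\langle b\rangle\ltimes_{(g,\gamma)}X$. Then the congruence of $Q$ induced by the abelian normal subgroup $1\times X$ is abelian if and only if $Q$ is a group.
   Context: Let $(X,+)$ be an abelian group and $(g,\gamma)$ a construction pair on it: $g$ a permutation of $X$, $\gamma:X\times X\to X$ symmetric, alternating, biadditive, with (C1) $g^{-1}(g(x)+g(y))=x+y+\gamma(x,y)+g^{-1}(\gamma(x,y))+g^{-2}(\gamma(x,y))$, (C2) $\gamma(\gamma(x,y),z)=0$, (C3) $g^{-1}(\gamma(x,y))=\gamma(g(x),y)$ for all $x,y,z$. Let $\mathrm{Rad}(\gamma)=\{x:\gamma(x,y)=0\ \forall y\}$ and $r(g,\gamma)$ the least positive $r$ with $\sum_{0\le k<r}g^k(x)\in\mathrm{Rad}(\gamma)$ for all $x$ ($\infty$ if none). $I(i,j)$ is $\emptyset$ if $i=j$, $\{i,\dots,j-1\}$ if $i<j$, $\{j,\dots,i-1\}$ if $j<i$. For a cyclic group $C=\langle b\rangle$ such that (if finite) $|g|$ and $r(g,\gamma)$ divide $|C|$, $C\ltimes_{(g,\gamma)}X$ is the Moufang loop on $C\times X$ with multiplication $(b^i,x)(b^j,y)=(b^{i+j},g^{-j}(x)+y+\sum_{k\in I(i+j,-j)}g^{-k}(\gamma(x,y)))$, neutral element $(1,0)$. In a loop $Q$ let $L_x(y)=xy$, $R_x(y)=yx$, $T_x=R_x^{-1}L_x$, $L_{x,y}=L_{xy}^{-1}L_xL_y$, $R_{x,y}=R_{xy}^{-1}R_yR_x$. A normal subloop $N$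 induces the congruence $\rho_N=\{(u,v):uN=vN\}$. For congruences $\rho,\sigma$ of $Q$, the commutator $[\rho,\sigma]_Q$ is the congruence generated by all pairs $(T_{b_1}(a),T_{c_1}(a))$, $(L_{b_1,b_2}(a),L_{c_1,c_2}(a))$, $(R_{b_1,b_2}(a),R_{c_1,c_2}(a))$ with $1\,\rho\, a$, $b_1\,\sigma\, c_1$, $b_2\,\sigma\,c_2$. A congruence $\rho$ is abelian if $[\rho,\rho]_Q$ is the identity relation. *)

theory Defs
  imports Main
begin

definition gpow :: "('a \<Rightarrow> 'a) \<Rightarrow> int \<Rightarrow> 'a \<Rightarrow> 'a" where
  "gpow g k = (if 0 \<le> k then g ^^ nat k else (inv g) ^^ nat (- k))"

definition construction_pair :: "('a::ab_group_add \<Rightarrow> 'a) \<Rightarrow> ('a \<Rightarrow> 'a \<Rightarrow> 'a) \<Rightarrow> bool" where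
  "construction_pair g \<gamma> \<longleftrightarrow>
     bij g
   \<and> (\<forall>x y. \<gamma> x y = \<gamma> y x)
   \<and> (\<forall>x. \<gamma> x x = 0)
   \<and> (\<forall>x y z. \<gamma> (x + y) z = \<gamma> x z + \<gamma> y z)
   \<and> (\<forall>x y z. \<gamma> x (y + z) = \<gamma> x y + \<gamma> x z)
   \<and> (\<forall>x y. inv g (g x + g y) =
          x + y + \<gamma> x y + inv g (\<gamma> x y) + inv g (inv g (\<gamma> x y)))
   \<and> (\<forall>x y z. \<gamma> (\<gamma> x y) z = 0)
   \<and> (\<forall>x y. inv g (\<gamma> x y) = \<gamma> (g x) y)"

definition Rad :: "('a::zero \<Rightarrow> 'a \<Rightarrow> 'a) \<Rightarrow> 'a set" where
  "Rad \<gamma> = {x. \<forall>y. \<gamma> x y = 0}"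

text \<open>r(g,gamma); the value 0 encodes infinity.\<close>
definition rgam :: "('a::comm_monoid_add \<Rightarrow> 'a) \<Rightarrow> ('a \<Rightarrow> 'a \<Rightarrow> 'a) \<Rightarrow> nat" where
  "rgam g \<gamma> = (if \<exists>r>0. \<forall>x. (\<Sum>k<r. (g ^^ k) x) \<in> Rad \<gamma>
                then LEAST r. r > 0 \<and> (\<forall>x. (\<Sum>k<r. (g ^^ k) x) \<in> Rad \<gamma>)
                else 0)"

text \<open>Order of a permutation; the value 0 encodes infinite order.\<close>
definition perm_order :: "('a \<Rightarrow> 'a) \<Rightarrow> nat" where
  "perm_order g = (if \<exists>k>0. g ^^ k = id then LEAST k. k > 0 \<and> g ^^ k = id else 0)"

definition Iset :: "int \<Rightarrow> int \<Rightarrow> int set" where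
  "Iset i j = (if i = j then {} else if i < j then {i..j - 1} else {j..i - 1})"

text \<open>C = <b> cyclic of order n, where n = 0 means C is infinite cyclic.
  An element (b^i, x) is represented as (i, x) with i the canonical
  representative: i \<in> {0..<n} if n > 0, i \<in> \<int> if n = 0.\<close>
definition sdp_carrier :: "nat \<Rightarrow> (int \<times> 'a) set" where
  "sdp_carrier n = {(i, x). n = 0 \<or> (0 \<le> i \<and> i < int n)}"

definition sdp_mult :: "nat \<Rightarrow> ('a::ab_group_add \<Rightarrow> 'a) \<Rightarrow> ('a \<Rightarrow> 'a \<Rightarrow> 'a)
    \<Rightarrow> int \<times> 'a \<Rightarrow> int \<times> 'a \<Rightarrow> int \<times> 'a" where
  "sdp_mult n g \<gamma> u v = (case u of (i, x) \<Rightarrow> case v of (j, y) \<Rightarrow>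
     ((i + j) mod int n,
      gpow g (- j) x + y + (\<Sum>k\<in>Iset (i + j) (- j). gpow g (- k) (\<gamma> x y))))"

definition Lmap :: "('e \<Rightarrow> 'e \<Rightarrow> 'e) \<Rightarrow> 'e \<Rightarrow> 'e \<Rightarrow> 'e" where
  "Lmap m a = (\<lambda>y. m a y)"

definition Rmap :: "('e \<Rightarrow> 'e \<Rightarrow> 'e) \<Rightarrow> 'e \<Rightarrow> 'e \<Rightarrow> 'e" where
  "Rmap m a = (\<lambda>y. m y a)"

definition Linv :: "'e set \<Rightarrow> ('e \<Rightarrow> 'e \<Rightarrow> 'e) \<Rightarrow> 'e \<Rightarrow> 'e \<Rightarrow> 'e" where
  "Linv S m a = inv_into S (Lmap m a)"

definition Rinv :: "'e set \<Rightarrow> ('e \<Rightarrow> 'e \<Rightarrow> 'e) \<Rightarrow> 'e \<Rightarrow> 'e \<Rightarrow> 'e" where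
  "Rinv S m a = inv_into S (Rmap m a)"

definition Tmap :: "'e set \<Rightarrow> ('e \<Rightarrow> 'e \<Rightarrow> 'e) \<Rightarrow> 'e \<Rightarrow> 'e \<Rightarrow> 'e" where
  "Tmap S m x = Rinv S m x \<circ> Lmap m x"

definition L2map :: "'e set \<Rightarrow> ('e \<Rightarrow> 'e \<Rightarrow> 'e) \<Rightarrow> 'e \<Rightarrow> 'e \<Rightarrow> 'e \<Rightarrow> 'e" where
  "L2map S m x y = Linv S m (m x y) \<circ> Lmap m x \<circ> Lmap m y"

definition R2map :: "'e set \<Rightarrow> ('e \<Rightarrow> 'e \<Rightarrow> 'e) \<Rightarrow> 'e \<Rightarrow> 'e \<Rightarrow> 'e \<Rightarrow> 'e" where
  "R2map S m x y = Rinv S m (m x y) \<circ> Rmap m y \<circ> Rmap m x"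

definition loop_congruence :: "'e set \<Rightarrow> ('e \<Rightarrow> 'e \<Rightarrow> 'e) \<Rightarrow> 'e rel \<Rightarrow> bool" where
  "loop_congruence S m \<rho> \<longleftrightarrow> equiv S \<rho> \<and>
     (\<forall>a b c d. (a, b) \<in> \<rho> \<longrightarrow> (c, d) \<in> \<rho> \<longrightarrow>
        (m a c, m b d) \<in> \<rho> \<and> (Linv S m a c, Linv S m b d) \<in> \<rho> \<and>
        (Rinv S m a c, Rinv S m b d) \<in> \<rho>)"

definition Cg :: "'e set \<Rightarrow> ('e \<Rightarrow> 'e \<Rightarrow> 'e) \<Rightarrow> 'e rel \<Rightarrow> 'e rel" where
  "Cg S m P = \<Inter> {\<rho>. loop_congruence S m \<rho> \<and> P \<subseteq> \<rho>}"

definition commutator :: "'e set \<Rightarrow> ('e \<Rightarrow> 'e \<Rightarrow> 'e) \<Rightarrow> 'e \<Rightarrow> 'e rel \<Rightarrow> 'e rel \<Rightarrow> 'e rel" where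
  "commutator S m e \<rho> \<sigma> = Cg S m
     ({(Tmap S m b1 a, Tmap S m c1 a) | a b1 c1. (e, a) \<in> \<rho> \<and> (b1, c1) \<in> \<sigma>}
    \<union> {(L2map S m b1 b2 a, L2map S m c1 c2 a) | a b1 b2 c1 c2.
         (e, a) \<in> \<rho> \<and> (b1, c1) \<in> \<sigma> \<and> (b2, c2) \<in> \<sigma>}
    \<union> {(R2map S m b1 b2 a, R2map S m c1 c2 a) | a b1 b2 c1 c2.
         (e, a) \<in> \<rho> \<and> (b1, c1) \<in> \<sigma> \<and> (b2, c2) \<in> \<sigma>})"

definition abelian_congruence :: "'e set \<Rightarrow> ('e \<Rightarrow> 'e \<Rightarrow> 'e) \<Rightarrow> 'e \<Rightarrow> 'e rel \<Rightarrow> bool" where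
  "abelian_congruence S m e \<rho> \<longleftrightarrow> commutator S m e \<rho> \<rho> = Id_on S"

definition cong_of :: "'e set \<Rightarrow> ('e \<Rightarrow> 'e \<Rightarrow> 'e) \<Rightarrow> 'e set \<Rightarrow> 'e rel" where
  "cong_of S m N = {(u, v). u \<in> S \<and> v \<in> S \<and> (\<lambda>k. m u k) ` N = (\<lambda>k. m v k) ` N}"

text \<open>A loop is a group iff its multiplication is associative.\<close>
definition is_group :: "'e set \<Rightarrow> ('e \<Rightarrow> 'e \<Rightarrow> 'e) \<Rightarrow> bool" where
  "is_group S m \<longleftrightarrow> (\<forall>a\<in>S. \<forall>b\<in>S. \<forall>c\<in>S. m (m a b) c = m a (m b c))"

end

theory Submission
  imports Defs
begin

lemma cpD:
  assumes "construction_pair g \<gamma>"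
  shows "bij g" "\<gamma> x y = \<gamma> y x" "\<gamma> (x+y) z = \<gamma> x z + \<gamma> y z"
    "\<gamma> x (y+z) = \<gamma> x y + \<gamma> x z" "\<gamma> (\<gamma> x y) z = 0" "inv g (\<gamma> x y) = \<gamma> (g x) y"
    "inv g (g x + g y) = x + y + \<gamma> x y + inv g (\<gamma> x y) + inv g (inv g (\<gamma> x y))"
  using assms unfolding construction_pair_def by blast+

lemma cp_zero:
  fixes g :: "'a::ab_group_add \<Rightarrow> 'a"
  assumes "construction_pair g \<gamma>"
  shows "\<gamma> 0 y = 0" "\<gamma> y 0 = 0" "\<gamma> x (y - z) = \<gamma> x y - \<gamma> x z" "\<gamma> a (\<gamma> b c) = 0"
    "inv g 0 = 0" "g 0 = 0" "g (\<gamma> v u) = \<gamma> (inv g v) u" "g (inv g z) = z" "inv g (g z) = z"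
proof -
  show 1: "\<gamma> 0 y = 0" using cpD(3)[OF assms, of 0 0 y] by simp
  show 2: "\<gamma> y 0 = 0" using cpD(4)[OF assms, of y 0 0] by simp
  show "\<gamma> x (y - z) = \<gamma> x y - \<gamma> x z" using cpD(4)[OF assms, of x "y - z" z] by (simp add: algebra_simps)
  show "\<gamma> a (\<gamma> b c) = 0" using cpD(2,5)[OF assms] by metis
  have b: "bij g" using cpD(1)[OF assms] .
  show gi: "g (inv g z) = z" for z using b by (simp add: bij_is_surj surj_f_inv_f)
  show ig: "inv g (g z) = z" for z using b by (simp add: bij_is_inj inv_f_f)
  have z2: "\<gamma> w 0 = 0" for w using cpD(4)[OF assms, of w 0 0] by simp
  show i0: "inv g 0 = 0" using cpD(6)[OF assms, of 0 0] z2 by simp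
  show "g 0 = 0" using gi[of 0] i0 by simp
  have "inv g (\<gamma> (inv g v) u) = \<gamma> v u" using cpD(6)[OF assms, of "inv g v" u] gi by simp
  then show "g (\<gamma> v u) = \<gamma> (inv g v) u" using gi by metis
qed

lemma gpow0[simp]: "gpow g 0 = id" by (simp add: gpow_def)
lemma gpow1: "gpow g 1 x = g x" by (simp add: gpow_def)
lemma gpowm1: "gpow g (-1) x = inv g x" by (simp add: gpow_def)

lemma funpow_fix0: "(f::'a::zero\<Rightarrow>'a) 0 = 0 \<Longrightarrow> (f ^^ m) 0 = 0" by (induct m) auto

lemma gpow_zero:
  assumes "construction_pair g \<gamma>" shows "gpow g k 0 = 0"
  using cp_zero[OF assms] by (simp add: gpow_def funpow_fix0)

lemma mult_eq: "sdp_mult n g \<gamma> (i,x) (j,y) = ((i+j) mod int n, gpow g (-j) x + y + (\<Sum>k\<in>Iset (i + j) (- j). gpow g (- k) (\<gamma> x y)))"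
  by (simp add: sdp_mult_def)

lemma Iset_1m1: "Iset 1 (-1) = {-1, 0}" by (auto simp: Iset_def)
lemma Iset_10: "Iset 1 0 = {0}" by (auto simp: Iset_def)
lemma Iset_00: "Iset 0 0 = {}" by (auto simp: Iset_def)

lemma one_mod: "n \<noteq> 1 \<Longrightarrow> (1::int) mod int n = 1"
  by (cases "n = 0") auto

lemma m_0v_1u:
  assumes "construction_pair g \<gamma>" "n \<noteq> 1"
  shows "sdp_mult n g \<gamma> (0,v) (1,u) = (1, inv g v + u + (g (\<gamma> v u) + \<gamma> v u))"
  using assms by (simp add: mult_eq Iset_1m1 one_mod gpow1 gpowm1)

lemma m_1w_0u:
  assumes "construction_pair g \<gamma>" "n \<noteq> 1"
  shows "sdp_mult n g \<gamma> (1,w) (0,u) = (1, w + u + \<gamma> w u)"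
  using assms by (simp add: mult_eq Iset_10 one_mod)

lemma m_0v_0u:
  shows "sdp_mult n g \<gamma> (0,v) (0,u) = (0, v + u)"
  by (simp add: mult_eq Iset_00)

lemma key_gamma0:
  assumes "construction_pair g \<gamma>" "n \<noteq> 1"
    and "sdp_mult n g \<gamma> (0,v) (1,u) = sdp_mult n g \<gamma> (1, inv g v) (0,u)"
  shows "\<gamma> v u = 0"
  using assms(3) unfolding m_0v_1u[OF assms(1,2)] m_1w_0u[OF assms(1,2)]
  using cp_zero(7)[OF assms(1)] by simp

lemma carrier_mem: "(i, x) \<in> sdp_carrier n \<longleftrightarrow> n = 0 \<or> (0 \<le> i \<and> i < int n)"
  by (simp add: sdp_carrier_def)

lemma coset0: "(\<lambda>k. sdp_mult n g \<gamma> (0,u) k) ` {(0, x) | x. True} = {(0, z) | z. True}"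
proof -
  have "(0, z) \<in> (\<lambda>k. sdp_mult n g \<gamma> (0,u) k) ` {(0, x) | x. True}" for z
    by (rule image_eqI[of _ _ "(0, z - u)"]) (auto simp: m_0v_0u)
  then show ?thesis by (auto simp: m_0v_0u)
qed

lemma coset1:
  assumes "construction_pair g \<gamma>" "n \<noteq> 1"
  shows "(\<lambda>k. sdp_mult n g \<gamma> (1,y) k) ` {(0, x) | x. True} = {(1, z) | z. True}"
proof -
  note cz = cp_zero[OF assms(1)]
  have "(1, z) \<in> (\<lambda>k. sdp_mult n g \<gamma> (1,y) k) ` {(0, x) | x. True}" for z
  proof (rule image_eqI[of _ _ "(0, z - y - \<gamma> y (z - y))"])
    show "(1, z) = sdp_mult n g \<gamma> (1, y) (0, z - y - \<gamma> y (z - y))"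
      using m_1w_0u[OF assms] cz(3,4) by simp
  qed auto
  then show ?thesis using m_1w_0u[OF assms] by auto
qed

lemma abel_gamma0:
  fixes g :: "'a::ab_group_add \<Rightarrow> 'a"
  assumes cp: "construction_pair g \<gamma>" and n1: "n \<noteq> 1"
    and ab: "abelian_congruence (sdp_carrier n) (sdp_mult n g \<gamma>) (0, 0)
           (cong_of (sdp_carrier n) (sdp_mult n g \<gamma>) {(0, x) | x. True})"
  shows "\<gamma> v u = 0"
proof -
  define S where "S = (sdp_carrier n :: (int \<times> 'a) set)"
  define m where "m = sdp_mult n g \<gamma>"
  define N where "N = {(0::int, x::'a) | x. True}"
  define \<rho> where "\<rho> = cong_of S m N"
  note cz = cp_zero[OF cp]
  have S0: "(0, x) \<in> S" for x by (auto simp: S_def carrier_mem)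
  have S1: "(1, x) \<in> S" for x using n1 by (auto simp: S_def carrier_mem)
  have r1: "((0,0), (0,u)) \<in> \<rho>" unfolding \<rho>_def cong_of_def m_def N_def
    using S0 coset0[of n g \<gamma> 0] coset0[of n g \<gamma> u] by simp
  have r2: "((0,v), (0,0)) \<in> \<rho>" unfolding \<rho>_def cong_of_def m_def N_def
    using S0 coset0[of n g \<gamma> 0] coset0[of n g \<gamma> v] by simp
  have r3: "((1,0), (1, inv g v)) \<in> \<rho>" unfolding \<rho>_def cong_of_def m_def N_def
    using S1 coset1[OF cp n1, of 0] coset1[OF cp n1, of "inv g v"] by simp
  define P where "P = ({(Tmap S m b1 a, Tmap S m c1 a) | a b1 c1. ((0,0), a) \<in> \<rho> \<and> (b1, c1) \<in> \<rho>}
    \<union> {(L2map S m b1 b2 a, L2map S m c1 c2 a) | a b1 b2 c1 c2.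
         ((0,0), a) \<in> \<rho> \<and> (b1, c1) \<in> \<rho> \<and> (b2, c2) \<in> \<rho>}
    \<union> {(R2map S m b1 b2 a, R2map S m c1 c2 a) | a b1 b2 c1 c2.
         ((0,0), a) \<in> \<rho> \<and> (b1, c1) \<in> \<rho> \<and> (b2, c2) \<in> \<rho>})"
  have comm: "commutator S m (0,0) \<rho> \<rho> = Cg S m P" by (simp add: commutator_def P_def)
  have "P \<subseteq> Cg S m P" unfolding Cg_def by blast
  then have PId: "P \<subseteq> Id_on S" using ab comm by (simp add: abelian_congruence_def S_def m_def \<rho>_def N_def)
  have "(L2map S m (0,v) (1,0) (0,u), L2map S m (0,0) (1, inv g v) (0,u)) \<in> P"
    unfolding P_def using r1 r2 r3 by blast
  with PId have eq: "L2map S m (0,v) (1,0) (0,u) = L2map S m (0,0) (1, inv g v) (0,u)" by auto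
  define w where "w = (1::int, inv g v)"
  have e1: "m (0,v) (1,0) = w" using m_0v_1u[OF cp n1, of v 0] cz by (simp add: m_def w_def)
  have e2: "m (1,0) (0,u) = (1,u)" using m_1w_0u[OF cp n1, of 0 u] cz by (simp add: m_def)
  have e3: "m (0,0) (1, inv g v) = w" using m_0v_1u[OF cp n1, of 0 "inv g v"] cz by (simp add: m_def w_def)
  have e4: "m (0,0) (m w (0,u)) = m w (0,u)" using m_0v_1u[OF cp n1] m_1w_0u[OF cp n1] cz
    by (simp add: m_def w_def)
  have e5: "m (0,v) (1,u) = m w (0, u + \<gamma> v u)" using m_0v_1u[OF cp n1] m_1w_0u[OF cp n1] cz cpD(4)[OF cp]
    by (simp add: m_def w_def algebra_simps)
  have "inv_into S (m w) (m w (0, u + \<gamma> v u)) = inv_into S (m w) (m w (0,u))"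
    using eq e1 e2 e3 e4 e5 by (simp add: L2map_def Linv_def Lmap_def w_def[symmetric])
  then have "m w (inv_into S (m w) (m w (0, u + \<gamma> v u))) = m w (inv_into S (m w) (m w (0,u)))" by simp
  then have "m w (0, u + \<gamma> v u) = m w (0,u)" using S0 by (simp add: f_inv_into_f)
  then show ?thesis using m_1w_0u[OF cp n1] cz cpD(4)[OF cp] by (simp add: m_def w_def)
qed

lemma rgam_gamma0:
  assumes "rgam g \<gamma> \<noteq> 0" "rgam g \<gamma> dvd 1"
  shows "\<gamma> x y = 0"
proof -
  have ex: "\<exists>r>0. \<forall>x. (\<Sum>k<r. (g ^^ k) x) \<in> Rad \<gamma>" using assms(1) unfolding rgam_def by (auto split: if_splits)
  then have r: "rgam g \<gamma> = (LEAST r. r > 0 \<and> (\<forall>x. (\<Sum>k<r. (g ^^ k) x) \<in> Rad \<gamma>))" by (simp add: rgam_def)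
  have "rgam g \<gamma> > 0 \<and> (\<forall>x. (\<Sum>k<rgam g \<gamma>. (g ^^ k) x) \<in> Rad \<gamma>)"
    unfolding r using ex by (rule LeastI_ex)
  moreover have "rgam g \<gamma> = 1" using assms(2) by simp
  ultimately have "\<forall>x. x \<in> Rad \<gamma>" by simp
  then show ?thesis by (simp add: Rad_def)
qed

lemma gpow_succ:
  assumes "bij g" shows "gpow g (k+1) x = g (gpow g k x)"
proof (cases "k \<ge> 0")
  case True
  then have "nat (k+1) = Suc (nat k)" by simp
  then show ?thesis using True by (simp add: gpow_def)
next
  case False
  then have e: "nat (-k) = Suc (nat (-(k+1)))" by simp
  have gi: "g (inv g z) = z" for z using assms by (simp add: bij_is_surj surj_f_inv_f)
  show ?thesis
  proof (cases "k + 1 = 0")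
    case True
    then have "k = -1" by simp
    then show ?thesis using gi by (simp add: gpow_def)
  next
    case F2: False
    then show ?thesis using False e gi by (simp add: gpow_def)
  qed
qed

lemma gpow_add:
  assumes "bij g" shows "gpow g (a + b) x = gpow g a (gpow g b x)"
proof (induct a rule: int_induct[where k=0])
  case base then show ?case by simp
next
  case (step1 i)
  have "gpow g (i + 1 + b) x = gpow g ((i + b) + 1) x" by (simp add: algebra_simps)
  also have "\<dots> = g (gpow g (i+b) x)" by (rule gpow_succ[OF assms])
  finally show ?case using step1 gpow_succ[OF assms] by simp
next
  case (step2 i)
  have ig: "inv g (g z) = z" for z using assms by (simp add: bij_is_inj inv_f_f)
  have a: "gpow g (i + b) x = g (gpow g (i - 1 + b) x)" using gpow_succ[OF assms, of "i - 1 + b" x] by (simp add: algebra_simps)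
  have c: "gpow g i y = g (gpow g (i - 1) y)" for y using gpow_succ[OF assms, of "i - 1" y] by simp
  have "gpow g (i - 1 + b) x = inv g (gpow g (i + b) x)" using a ig by simp
  also have "\<dots> = inv g (gpow g i (gpow g b x))" using step2 by simp
  also have "\<dots> = gpow g (i - 1) (gpow g b x)" using c ig by simp
  finally show ?case .
qed

lemma gpow_period:
  assumes "bij g" "g ^^ n = id"
  shows "gpow g (k + int n * t) x = gpow g k x"
proof -
  have p: "gpow g (int n) y = y" for y using assms(2) by (simp add: gpow_def)
  have q: "gpow g (- int n) y = y" for y
    using gpow_add[OF assms(1), of "- int n" "int n" y] p by simp
  have "gpow g (int n * t) y = y" for y
  proof (induct t rule: int_induct[where k=0])
    case base then show ?case by simp
  next
    case (step1 i)
    then show ?case using gpow_add[OF assms(1), of "int n" "int n * i" y] p by (simp add: algebra_simps)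
  next
    case (step2 i)
    then show ?case using gpow_add[OF assms(1), of "- int n" "int n * i" y] q by (simp add: algebra_simps)
  qed
  then show ?thesis using gpow_add[OF assms(1), of k "int n * t" x] by simp
qed

lemma perm_order_n:
  assumes "perm_order g \<noteq> 0" "perm_order g dvd n"
  shows "g ^^ n = id"
proof -
  have ex: "\<exists>k>0. g ^^ k = id" using assms(1) unfolding perm_order_def by (auto split: if_splits)
  then have r: "perm_order g = (LEAST k. k > 0 \<and> g ^^ k = id)" by (simp add: perm_order_def)
  have "perm_order g > 0 \<and> g ^^ perm_order g = id" unfolding r using ex by (rule LeastI_ex)
  moreover obtain c where "n = perm_order g * c" using assms(2) by blast
  ultimately show ?thesis by (metis funpow_mult id_funpow)
qed

lemma funpow_addhom: "(\<And>x y. (f::'a::ab_group_add\<Rightarrow>'a) (x + y) = f x + f y) \<Longrightarrow> (f ^^ m) (x + y) = (f ^^ m) x + (f ^^ m) y"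
  by (induct m) auto

lemma g_additive:
  fixes g :: "'a::ab_group_add \<Rightarrow> 'a"
  assumes cp: "construction_pair g \<gamma>" and z: "\<And>x y. \<gamma> x y = 0"
  shows "g (x + y) = g x + g y" "inv g (x + y) = inv g x + inv g y" "gpow g k (x + y) = gpow g k x + gpow g k y"
proof -
  note cz = cp_zero[OF cp]
  have a: "g (u + v) = g u + g v" for u v
  proof -
    have "inv g (g u + g v) = u + v" using cpD(7)[OF cp, of u v] z cz by simp
    then show ?thesis using cz(8) by metis
  qed
  show "g (x + y) = g x + g y" by (rule a)
  have b: "inv g (u + v) = inv g u + inv g v" for u v
    using a[of "inv g u" "inv g v"] cz(8,9) by metis
  show "inv g (x + y) = inv g x + inv g y" by (rule b)
  show "gpow g k (x + y) = gpow g k x + gpow g k y"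
    unfolding gpow_def using funpow_addhom[of g] funpow_addhom[of "inv g"] a b by simp
qed

lemma mult0:
  fixes g :: "'a::ab_group_add \<Rightarrow> 'a"
  assumes cp: "construction_pair g \<gamma>" and z: "\<And>x y. \<gamma> x y = 0"
  shows "sdp_mult n g \<gamma> (i,x) (j,y) = ((i+j) mod int n, gpow g (-j) x + y)"
  by (simp add: mult_eq z gpow_zero[OF cp])

lemma assoc0:
  fixes g :: "'a::ab_group_add \<Rightarrow> 'a"
  assumes cp: "construction_pair g \<gamma>" and z: "\<And>x y. \<gamma> x y = 0"
    and gn: "n > 0 \<Longrightarrow> g ^^ n = id"
  shows "sdp_mult n g \<gamma> (sdp_mult n g \<gamma> a b) c = sdp_mult n g \<gamma> a (sdp_mult n g \<gamma> b c)"
proof -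
  obtain i x where a: "a = (i,x)" by force
  obtain j y where b: "b = (j,y)" by force
  obtain k w where c: "c = (k,w)" by force
  have bij: "bij g" using cpD(1)[OF cp] .
  have e1: "((i + j) mod int n + k) mod int n = (i + (j + k) mod int n) mod int n"
    by (simp add: mod_add_left_eq mod_add_right_eq add.assoc)
  have e2: "gpow g (-k) (gpow g (-j) x) = gpow g (- ((j + k) mod int n)) x"
  proof (cases "n = 0")
    case True then show ?thesis using gpow_add[OF bij, of "-k" "-j" x] by (simp add: algebra_simps)
  next
    case False
    have "- k + - j = - ((j + k) mod int n) + int n * (- ((j + k) div int n))"
      using div_mult_mod_eq[of "j+k" "int n"] by (simp add: algebra_simps)
    then show ?thesis using gpow_add[OF bij, of "-k" "-j" x] gpow_period[OF bij gn, of "- ((j + k) mod int n)" "- ((j + k) div int n)" x] False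
      by simp
  qed
  show ?thesis unfolding a b c mult0[OF cp z] using e1 e2 g_additive(3)[OF cp z] by (simp add: add.assoc)
qed

lemma equiv_Id_on: "equiv S (Id_on S)"
  by (auto simp: equiv_def refl_on_def sym_def trans_def)

lemma abelian0:
  fixes g :: "'a::ab_group_add \<Rightarrow> 'a"
  assumes cp: "construction_pair g \<gamma>" and z: "\<And>x y. \<gamma> x y = 0"
    and gn: "n > 0 \<Longrightarrow> g ^^ n = id"
  shows "abelian_congruence (sdp_carrier n) (sdp_mult n g \<gamma>) (0, 0)
           (cong_of (sdp_carrier n) (sdp_mult n g \<gamma>) {(0, x) | x. True})"
proof -
  define S where "S = (sdp_carrier n :: (int \<times> 'a) set)"
  define m where "m = sdp_mult n g \<gamma>"
  define N where "N = {(0::int, x::'a) | x. True}"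
  define \<rho> where "\<rho> = cong_of S m N"
  have bij: "bij g" using cpD(1)[OF cp] .
  have M: "m (i,x) (j,y) = ((i+j) mod int n, gpow g (-j) x + y)" for i j x y
    unfolding m_def by (rule mult0[OF cp z])
  have A: "m (m a b) c = m a (m b c)" for a b c unfolding m_def by (rule assoc0[OF cp z gn])
  have modid: "i mod int n = i" if "(i,x) \<in> S" for i x
    using that by (auto simp: S_def carrier_mem)
  have modS: "(i mod int n, x) \<in> S" for i x
    by (auto simp: S_def carrier_mem)
  have inv1: "gpow g (-j) (gpow g j x) = x" for j x using gpow_add[OF bij, of "-j" j x] by simp
  have inv2: "gpow g j (gpow g (-j) x) = x" for j x using gpow_add[OF bij, of j "-j" x] by simp
  have clos: "m a b \<in> S" for a b by (cases a, cases b) (simp add: M modS)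
  have Lsurj: "p \<in> (m a) ` S" if "p \<in> S" for a p
  proof -
    obtain i x where a: "a = (i,x)" by force
    obtain l q where p: "p = (l,q)" by force
    show ?thesis unfolding a p
    proof (rule image_eqI[of _ _ "((l - i) mod int n, q - gpow g (-((l - i) mod int n)) x)"])
      show "(l, q) = m (i, x) ((l - i) mod int n, q - gpow g (- ((l - i) mod int n)) x)"
      proof -
        define k where "k = (l - i) mod int n"
        have lS: "l mod int n = l" using modid[of l q] that unfolding p .
        have "(i + k) mod int n = (i + (l - i)) mod int n" unfolding k_def by (simp only: mod_add_right_eq)
        also have "\<dots> = l" using lS by simp
        finally have e: "(i + k) mod int n = l" .
        have "m (i,x) (k, q - gpow g (-k) x) = ((i + k) mod int n, gpow g (-k) x + (q - gpow g (-k) x))" by (rule M)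
        also have "\<dots> = (l, q)" using e by simp
        finally show ?thesis unfolding k_def by simp
      qed
    qed (rule modS)
  qed
  have Rsurj: "p \<in> (\<lambda>z. m z b) ` S" if "p \<in> S" for b p
  proof -
    obtain j y where b: "b = (j,y)" by force
    obtain l q where p: "p = (l,q)" by force
    show ?thesis unfolding b p
    proof (rule image_eqI[of _ _ "((l - j) mod int n, gpow g j (q - y))"])
      show "(l, q) = m ((l - j) mod int n, gpow g j (q - y)) (j, y)"
      proof -
        define k where "k = (l - j) mod int n"
        have lS: "l mod int n = l" using modid[of l q] that unfolding p .
        have "(k + j) mod int n = ((l - j) + j) mod int n" unfolding k_def by (simp only: mod_add_left_eq)
        also have "\<dots> = l" using lS by simp
        finally have e: "(k + j) mod int n = l" .
        have "m (k, gpow g j (q - y)) (j, y) = ((k + j) mod int n, gpow g (-j) (gpow g j (q - y)) + y)" by (rule M)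
        also have "\<dots> = (l, q)" using e inv1 by simp
        finally show ?thesis unfolding k_def by simp
      qed
    qed (rule modS)
  qed
  have modcancel: "j = j'" if "(i + j) mod int n = (i + j') mod int n" "(j,y) \<in> S" "(j',y') \<in> S" for i j j' y y'
  proof -
    have "j mod int n = ((i + j) - i) mod int n" by simp
    also have "\<dots> = ((i + j) mod int n - i) mod int n" by (simp only: mod_diff_left_eq)
    also have "\<dots> = ((i + j') mod int n - i) mod int n" using that(1) by simp
    also have "\<dots> = ((i + j') - i) mod int n" by (simp only: mod_diff_left_eq)
    also have "\<dots> = j' mod int n" by simp
    finally have "j mod int n = j' mod int n" .
    then show ?thesis using modid[OF that(2)] modid[OF that(3)] by simp
  qed
  have Linj: "inj_on (m a) S" for a
  proof (rule inj_onI)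
    fix u v assume u: "u \<in> S" and v: "v \<in> S" and e: "m a u = m a v"
    obtain i x where a: "a = (i,x)" by force
    obtain j y where uu: "u = (j,y)" by force
    obtain j' y' where vv: "v = (j',y')" by force
    have "(i + j) mod int n = (i + j') mod int n" using e unfolding a uu vv by (simp add: M)
    then have "j = j'" using u v modcancel unfolding uu vv by blast
    then show "u = v" using e unfolding a uu vv by (simp add: M)
  qed
  have Rinj: "inj_on (\<lambda>z. m z b) S" for b
  proof (rule inj_onI)
    fix u v assume u: "u \<in> S" and v: "v \<in> S" and e: "m u b = m v b"
    obtain i x where b: "b = (i,x)" by force
    obtain j y where uu: "u = (j,y)" by force
    obtain j' y' where vv: "v = (j',y')" by force
    have "(i + j) mod int n = (i + j') mod int n" using e unfolding b uu vv by (simp add: M add.commute)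
    then have jj: "j = j'" using u v modcancel unfolding uu vv by blast
    then have "gpow g (-i) y = gpow g (-i) y'" using e unfolding b uu vv by (simp add: M)
    then have "gpow g i (gpow g (-i) y) = gpow g i (gpow g (-i) y')" by simp
    then show "u = v" using jj inv2 unfolding uu vv by simp
  qed
  have cong: "loop_congruence S m (Id_on S)"
    unfolding loop_congruence_def
  proof (intro conjI allI impI equiv_Id_on)
    fix a b c d assume ab: "(a, b) \<in> Id_on S" and cd: "(c, d) \<in> Id_on S"
    then have e: "a = b" "c = d" and aS: "a \<in> S" and cS: "c \<in> S" by auto
    show "(m a c, m b d) \<in> Id_on S" using e clos[of b d] by auto
    have "Linv S m a c \<in> S" unfolding Linv_def Lmap_def by (rule inv_into_into[OF Lsurj[OF cS]])
    then show "(Linv S m a c, Linv S m b d) \<in> Id_on S" using e by (auto intro: Id_onI)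
    have "Rinv S m a c \<in> S" unfolding Rinv_def Rmap_def by (rule inv_into_into[OF Rsurj[OF cS]])
    then show "(Rinv S m a c, Rinv S m b d) \<in> Id_on S" using e by (auto intro: Id_onI)
  qed
  have rho: "fst u = fst v \<and> u \<in> S \<and> v \<in> S" if "(u,v) \<in> \<rho>" for u v
  proof -
    have uS: "u \<in> S" and vS: "v \<in> S" and ce: "(m u) ` N = (m v) ` N"
      using that by (auto simp: \<rho>_def cong_of_def)
    obtain i x where uu: "u = (i,x)" by force
    obtain j y where vv: "v = (j,y)" by force
    have "m u (0,0) = u" using modid uS uu by (simp add: M)
    then have "u \<in> (m u) ` N" by (intro image_eqI[of _ _ "(0,0)"]) (auto simp: N_def)
    then have "u \<in> (m v) ` N" using ce by simp
    then obtain t where "u = m v (0, t)" unfolding N_def by auto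
    then have "fst u = j mod int n" using vv by (simp add: M)
    then show ?thesis using modid vS vv uS by simp
  qed
  define P where "P = ({(Tmap S m b1 a, Tmap S m c1 a) | a b1 c1. ((0,0), a) \<in> \<rho> \<and> (b1, c1) \<in> \<rho>}
    \<union> {(L2map S m b1 b2 a, L2map S m c1 c2 a) | a b1 b2 c1 c2.
         ((0,0), a) \<in> \<rho> \<and> (b1, c1) \<in> \<rho> \<and> (b2, c2) \<in> \<rho>}
    \<union> {(R2map S m b1 b2 a, R2map S m c1 c2 a) | a b1 b2 c1 c2.
         ((0,0), a) \<in> \<rho> \<and> (b1, c1) \<in> \<rho> \<and> (b2, c2) \<in> \<rho>})"
  have comm: "commutator S m (0,0) \<rho> \<rho> = Cg S m P" by (simp add: commutator_def P_def)
  have L2: "L2map S m b1 b2 a = a" if "a \<in> S" for a b1 b2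
  proof -
    have "L2map S m b1 b2 a = inv_into S (m (m b1 b2)) (m (m b1 b2) a)"
      unfolding L2map_def Linv_def Lmap_def using A[of b1 b2 a] by simp
    also have "\<dots> = a" by (rule inv_into_f_f[OF Linj that])
    finally show ?thesis .
  qed
  have R2: "R2map S m b1 b2 a = a" if "a \<in> S" for a b1 b2
  proof -
    have "R2map S m b1 b2 a = inv_into S (\<lambda>z. m z (m b1 b2)) (m a (m b1 b2))"
      unfolding R2map_def Rinv_def Rmap_def using A[of a b1 b2] by simp
    also have "\<dots> = a" using inv_into_f_f[OF Rinj[of "m b1 b2"] that] by simp
    finally show ?thesis .
  qed
  have T: "Tmap S m (j,y) (0,x) = (0, gpow g j x)" if "(j,y) \<in> S" for j y x
  proof -
    have "m (j,y) (0,x) = m (0, gpow g j x) (j,y)" using modid[OF that] inv1 by (simp add: M add.commute)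
    moreover have "(0, gpow g j x) \<in> S" using modS[of 0] by simp
    ultimately show ?thesis unfolding Tmap_def Rinv_def Lmap_def Rmap_def
      using inv_into_f_f[OF Rinj[of "(j,y)"]] by simp
  qed
  have PId: "P \<subseteq> Id_on S"
  proof
    fix pr assume "pr \<in> P"
    then consider (t) a b1 c1 where "pr = (Tmap S m b1 a, Tmap S m c1 a)" "((0,0), a) \<in> \<rho>" "(b1, c1) \<in> \<rho>"
      | (l) a b1 b2 c1 c2 where "pr = (L2map S m b1 b2 a, L2map S m c1 c2 a)" "((0,0), a) \<in> \<rho>"
      | (r) a b1 b2 c1 c2 where "pr = (R2map S m b1 b2 a, R2map S m c1 c2 a)" "((0,0), a) \<in> \<rho>"
      unfolding P_def by blast
    then show "pr \<in> Id_on S"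
    proof cases
      case t
      obtain i x where a: "a = (i,x)" by force
      obtain j y where b: "b1 = (j,y)" by force
      obtain j' y' where c: "c1 = (j',y')" by force
      have "i = 0" "a \<in> S" using rho[OF t(2)] a by auto
      moreover have "j = j'" "b1 \<in> S" "c1 \<in> S" using rho[OF t(3)] b c by auto
      ultimately have "pr = ((0, gpow g j x), (0, gpow g j x))" using t(1) T a b c by simp
      moreover have "(0, gpow g j x) \<in> S" using modS[of 0] by simp
      ultimately show ?thesis by (auto intro: Id_onI)
    next
      case l
      then have "a \<in> S" using rho by blast
      then show ?thesis using l(1) L2 by (auto intro: Id_onI)
    next
      case r
      then have "a \<in> S" using rho by blast
      then show ?thesis using r(1) R2 by (auto intro: Id_onI)
    qed
  qed
  have "Cg S m P = Id_on S"
  proof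
    show "Cg S m P \<subseteq> Id_on S" unfolding Cg_def by (rule Inter_lower) (use cong PId in simp)
    show "Id_on S \<subseteq> Cg S m P" unfolding Cg_def
    proof (rule Inter_greatest)
      fix r assume "r \<in> {\<rho>. loop_congruence S m \<rho> \<and> P \<subseteq> \<rho>}"
      then have "equiv S r" by (simp add: loop_congruence_def)
      then show "Id_on S \<subseteq> r" by (auto simp: equiv_def refl_on_def)
    qed
  qed
  then have "abelian_congruence S m (0,0) \<rho>" using comm by (simp add: abelian_congruence_def)
  then show ?thesis unfolding S_def m_def \<rho>_def N_def .
qed

theorem mainTheorem9:
  fixes g :: "'a::ab_group_add \<Rightarrow> 'a" and \<gamma> :: "'a \<Rightarrow> 'a \<Rightarrow> 'a" and n :: nat
  assumes "construction_pair g \<gamma>"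
    and "n > 0 \<Longrightarrow> perm_order g \<noteq> 0 \<and> perm_order g dvd n \<and> rgam g \<gamma> \<noteq> 0 \<and> rgam g \<gamma> dvd n"
  shows "abelian_congruence (sdp_carrier n) (sdp_mult n g \<gamma>) (0, 0)
           (cong_of (sdp_carrier n) (sdp_mult n g \<gamma>) {(0, x) | x. True})
         \<longleftrightarrow> is_group (sdp_carrier n) (sdp_mult n g \<gamma>)"
proof -
  note cp = assms(1)
  have gn: "g ^^ n = id" if "n > 0"
  proof -
    have "perm_order g \<noteq> 0" "perm_order g dvd n" using assms(2)[OF that] by auto
    then show ?thesis by (rule perm_order_n)
  qed
  have n1: "\<gamma> x y = 0" if "n = 1" for x y
  proof -
    have "rgam g \<gamma> \<noteq> 0" "rgam g \<gamma> dvd 1" using assms(2) that by auto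
    then show ?thesis by (rule rgam_gamma0)
  qed
  show ?thesis
  proof
    assume ab: "abelian_congruence (sdp_carrier n) (sdp_mult n g \<gamma>) (0, 0)
           (cong_of (sdp_carrier n) (sdp_mult n g \<gamma>) {(0, x) | x. True})"
    have z: "\<gamma> x y = 0" for x y
    proof (cases "n = 1")
      case True then show ?thesis by (rule n1)
    next
      case False then show ?thesis by (rule abel_gamma0[OF cp _ ab])
    qed
    show "is_group (sdp_carrier n) (sdp_mult n g \<gamma>)"
      unfolding is_group_def
    proof (intro ballI)
      fix a b c
      show "sdp_mult n g \<gamma> (sdp_mult n g \<gamma> a b) c = sdp_mult n g \<gamma> a (sdp_mult n g \<gamma> b c)"
        by (rule assoc0[OF cp z gn])
    qed
  next
    assume gr: "is_group (sdp_carrier n) (sdp_mult n g \<gamma>)"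
    have z: "\<gamma> v u = 0" for v u
    proof (cases "n = 1")
      case True then show ?thesis by (rule n1)
    next
      case False
      note cz = cp_zero[OF cp]
      have S0: "(0, x) \<in> sdp_carrier n" for x by (auto simp: carrier_mem)
      have S1: "(1, x) \<in> sdp_carrier n" for x using False by (auto simp: carrier_mem)
      have a: "sdp_mult n g \<gamma> (sdp_mult n g \<gamma> (0,v) (1,0)) (0,u) = sdp_mult n g \<gamma> (0,v) (sdp_mult n g \<gamma> (1,0) (0,u))"
        using gr[unfolded is_group_def, rule_format, OF S0 S1 S0] .
      have b: "sdp_mult n g \<gamma> (0,v) (1,0) = (1, inv g v)" using m_0v_1u[OF cp False, of v 0] cz by simp
      have c: "sdp_mult n g \<gamma> (1,0) (0,u) = (1,u)" using m_1w_0u[OF cp False, of 0 u] cz by simp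
      have "sdp_mult n g \<gamma> (0,v) (1,u) = sdp_mult n g \<gamma> (1, inv g v) (0,u)"
        using a unfolding b c by simp
      then show ?thesis by (rule key_gamma0[OF cp False])
    qed
    show "abelian_congruence (sdp_carrier n) (sdp_mult n g \<gamma>) (0, 0)
           (cong_of (sdp_carrier n) (sdp_mult n g \<gamma>) {(0, x) | x. True})"
      by (rule abelian0[OF cp z gn])
  qed
qed

end
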